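(* Let $A,B\in gl(3,\mathbb{R})$ and consider the induced bilinear control system on $\mathbb{S}^2$ $$\dot s=h_A(s)+u\,h_B(s),\qquad s\in\mathbb{S}^2,\ u\in\mathbb{R},$$ where $h_C(s)=Cs-\langle Cs,s\rangle s$ for $C\in gl(3,\mathbb{R})$. If $$\operatorname{rank}\begin{pmatrix}h_A(s) & h_B(s) & h_{[A,B]}(s)\end{pmatrix}=2\quad\text{for all } s\in\mathbb{S}^2,$$ then the system satisfies the Lie algebra rank condition on $\mathbb{S}^2$. In particular, if $[A,B]=0$, the system does not satisfy the Lie algebra rank condition.
   Context: $gl(3,\mathbb{R})$ is the space of real $3\times3$ matrices, $[A,B]=AB-BA$, and $\langle\cdot,\cdot\rangle$ the Euclidean inner product. Let $\mathcal{L}_\Sigma$ be the Lie subalgebra of the Lie algebra $\chi(\mathbb{S}^2)$ of smooth vector fields on $\mathbb{S}^2$ (bracket $[X,Y]=dX(Y)-dY(X)$) generated by $\{h_A+uh_B:u\in\mathbb{R}\}$, and $\mathcal{L}_\Sigma(s)=\{X(s):X\in\mathcal{L}_\Sigma\}\subset T_s\mathbb{S}^2$. The system satisfies the Lie algebra rank condition (LARC) on $\mathbb{S}^2$ if $\dim\mathcal{L}_\Sigma(s)=2$ for every $s\in\mathbb{S}^2$. *)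

theory Defs
  imports "HOL-Analysis.Analysis"
begin

definition S2 :: "(real^3) set" where
  "S2 = {s. norm s = 1}"

definition commutator :: "real^3^3 \<Rightarrow> real^3^3 \<Rightarrow> real^3^3" where
  "commutator A B = A ** B - B ** A"

text \<open>Induced vector field h_C(s) = Cs - <Cs,s> s (given by a polynomial formula on all of R^3).\<close>
definition hfield :: "real^3^3 \<Rightarrow> real^3 \<Rightarrow> real^3" where
  "hfield C s = C *v s - ((C *v s) \<bullet> s) *\<^sub>R s"

definition vf_bracket :: "(real^3 \<Rightarrow> real^3) \<Rightarrow> (real^3 \<Rightarrow> real^3) \<Rightarrow> real^3 \<Rightarrow> real^3" where
  "vf_bracket X Y = (\<lambda>x. frechet_derivative X (at x) (Y x) - frechet_derivative Y (at x) (X x))"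

text \<open>All members are polynomial (hence smooth) fields on R^3, tangent to S^2;
  their values on S^2 are the corresponding vector fields on S^2.\<close>
inductive_set lie_gen :: "real^3^3 \<Rightarrow> real^3^3 \<Rightarrow> (real^3 \<Rightarrow> real^3) set"
  for A B :: "real^3^3" where
  gen: "(\<lambda>s. hfield A s + u *\<^sub>R hfield B s) \<in> lie_gen A B"
| add: "X \<in> lie_gen A B \<Longrightarrow> Y \<in> lie_gen A B \<Longrightarrow> (\<lambda>s. X s + Y s) \<in> lie_gen A B"
| smult: "X \<in> lie_gen A B \<Longrightarrow> (\<lambda>s. c *\<^sub>R X s) \<in> lie_gen A B"
| bracket: "X \<in> lie_gen A B \<Longrightarrow> Y \<in> lie_gen A B \<Longrightarrow> vf_bracket X Y \<in> lie_gen A B"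

definition lie_eval :: "real^3^3 \<Rightarrow> real^3^3 \<Rightarrow> real^3 \<Rightarrow> (real^3) set" where
  "lie_eval A B s = {X s | X. X \<in> lie_gen A B}"

definition LARC :: "real^3^3 \<Rightarrow> real^3^3 \<Rightarrow> bool" where
  "LARC A B \<longleftrightarrow> (\<forall>s\<in>S2. dim (lie_eval A B s) = 2)"

definition hmatrix :: "real^3^3 \<Rightarrow> real^3^3 \<Rightarrow> real^3 \<Rightarrow> real^3^3" where
  "hmatrix A B s = transpose (vector [hfield A s, hfield B s, hfield (commutator A B) s])"

end

theory Submission
  imports Defs
begin

lemma generic:
  fixes p q r w x :: "'a::real_inner"
  shows "(r - (q \<bullet> x) *\<^sub>R p - (((r - (q \<bullet> x) *\<^sub>R p) \<bullet> x) + p \<bullet> (q - (q \<bullet> x) *\<^sub>R x)) *\<^sub>R x - (p \<bullet> x) *\<^sub>R (q - (q \<bullet> x) *\<^sub>R x))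
       - (w - (p \<bullet> x) *\<^sub>R q - (((w - (p \<bullet> x) *\<^sub>R q) \<bullet> x) + q \<bullet> (p - (p \<bullet> x) *\<^sub>R x)) *\<^sub>R x - (q \<bullet> x) *\<^sub>R (p - (p \<bullet> x) *\<^sub>R x))
       = (r - w) - ((r - w) \<bullet> x) *\<^sub>R x"
  by (simp add: inner_diff_left inner_diff_right algebra_simps inner_commute)

lemma hfield_deriv: "(hfield C has_derivative (\<lambda>v. C *v v - ((C *v v) \<bullet> x + (C *v x) \<bullet> v) *\<^sub>R x - ((C *v x) \<bullet> x) *\<^sub>R v)) (at x)"
  unfolding hfield_def
  by (auto intro!: derivative_eq_intros bounded_linear_imp_has_derivative simp: algebra_simps inner_commute)

lemma hfield_fd: "frechet_derivative (hfield C) (at x) v = C *v v - ((C *v v) \<bullet> x + (C *v x) \<bullet> v) *\<^sub>R x - ((C *v x) \<bullet> x) *\<^sub>R v"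
  by (subst frechet_derivative_at[OF hfield_deriv[of C x], symmetric]) (rule refl)

lemma bracket_h: "vf_bracket (hfield C) (hfield D) = hfield (commutator C D)"
proof
  fix x
  have "vf_bracket (hfield C) (hfield D) x =
    (C *v hfield D x - ((C *v hfield D x) \<bullet> x + (C *v x) \<bullet> hfield D x) *\<^sub>R x - ((C *v x) \<bullet> x) *\<^sub>R hfield D x)
  - (D *v hfield C x - ((D *v hfield C x) \<bullet> x + (D *v x) \<bullet> hfield C x) *\<^sub>R x - ((D *v x) \<bullet> x) *\<^sub>R hfield C x)"
    unfolding vf_bracket_def hfield_fd by (rule refl)
  also have "\<dots> = hfield (commutator C D) x"
    unfolding hfield_def commutator_def matrix_vector_mult_diff_rdistrib matrix_vector_mul_assoc[symmetric]
      matrix_vector_mult_diff_distrib matrix_vector_mult_scaleR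
    by (rule generic)
  finally show "vf_bracket (hfield C) (hfield D) x = hfield (commutator C D) x" .
qed
lemma hfield_add: "hfield (C + D) x = hfield C x + hfield D x"
  unfolding hfield_def by (simp add: matrix_vector_mult_add_rdistrib inner_add_left algebra_simps)

lemma hfield_scale: "hfield (c *\<^sub>R C) x = c *\<^sub>R hfield C x"
  unfolding hfield_def by (simp add: scaleR_matrix_vector_assoc[symmetric] algebra_simps)

lemma lie_gen_h: "X \<in> lie_gen A B \<Longrightarrow> \<exists>C. X = hfield C"
proof (induction rule: lie_gen.induct)
  case (gen u)
  then show ?case by (intro exI[of _ "A + u *\<^sub>R B"]) (auto simp: hfield_add hfield_scale)
next
  case (add X Y)
  then obtain C D where "X = hfield C" "Y = hfield D" by blast
  then show ?case by (intro exI[of _ "C + D"]) (auto simp: hfield_add)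
next
  case (smult X c)
  then obtain C where "X = hfield C" by blast
  then show ?case by (intro exI[of _ "c *\<^sub>R C"]) (auto simp: hfield_scale)
next
  case (bracket X Y)
  then obtain C D where "X = hfield C" "Y = hfield D" by blast
  then show ?case by (auto simp: bracket_h)
qed

lemma madd_rdistrib: "((A::real^3^3) + B) ** C = A ** C + B ** C"
  by (simp add: matrix_matrix_mult_def vec_eq_iff sum.distrib algebra_simps)

lemma comm0: assumes "commutator A B = 0"
  shows "commutator (a *\<^sub>R A + b *\<^sub>R B) (c *\<^sub>R A + d *\<^sub>R B) = 0"
proof -
  have "B ** A = A ** B" using assms unfolding commutator_def by simp
  then show ?thesis unfolding commutator_def
    by (simp add: madd_rdistrib matrix_add_ldistrib matrix_scalar_ac scalar_matrix_assoc[symmetric] algebra_simps)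
qed


lemma lie_gen_h0: assumes "commutator A B = 0"
  shows "X \<in> lie_gen A B \<Longrightarrow> \<exists>a b. X = hfield (a *\<^sub>R A + b *\<^sub>R B)"
proof (induction rule: lie_gen.induct)
  case (gen u)
  then show ?case by (intro exI[of _ 1] exI[of _ u]) (auto simp: hfield_add hfield_scale)
next
  case (add X Y)
  then obtain a b c d where "X = hfield (a *\<^sub>R A + b *\<^sub>R B)" "Y = hfield (c *\<^sub>R A + d *\<^sub>R B)" by blast
  then show ?case by (intro exI[of _ "a+c"] exI[of _ "b+d"]) (auto simp: hfield_add hfield_scale algebra_simps)
next
  case (smult X c)
  then obtain a b where "X = hfield (a *\<^sub>R A + b *\<^sub>R B)" by blast
  then show ?case by (intro exI[of _ "c*a"] exI[of _ "c*b"]) (auto simp: hfield_add hfield_scale algebra_simps)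
next
  case (bracket X Y)
  then obtain a b c d where "X = hfield (a *\<^sub>R A + b *\<^sub>R B)" "Y = hfield (c *\<^sub>R A + d *\<^sub>R B)" by blast
  then have "vf_bracket X Y = hfield (0 *\<^sub>R A + 0 *\<^sub>R B)"
    using comm0[OF assms, of a b c d] by (simp add: bracket_h)
  then show ?case by blast
qed

lemma cubic_root: "\<exists>t::real. t^3 + a*t^2 + b*t + c = 0"
proof -
  define M where "M = 1 + \<bar>a\<bar> + \<bar>b\<bar> + \<bar>c\<bar>"
  define f where "f = (\<lambda>t::real. t^3 + a*t^2 + b*t + c)"
  have M1: "M \<ge> 1" unfolding M_def by simp
  have MM: "M \<le> M^2" using M1 by (simp add: power2_eq_square)
  have M2: "1 \<le> M^2" using M1 by (simp add: one_le_power)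
  have c2: "\<bar>c\<bar> \<le> \<bar>c\<bar>*M^2" using mult_left_mono[OF M2, of "\<bar>c\<bar>"] by simp
  have bM: "\<bar>b\<bar>*M \<le> \<bar>b\<bar>*M^2" using mult_left_mono[OF MM, of "\<bar>b\<bar>"] by simp
  have e1: "\<bar>a*M^2\<bar> = \<bar>a\<bar>*M^2" by (simp add: abs_mult)
  have e2: "\<bar>b*M\<bar> = \<bar>b\<bar>*M" using M1 by (simp add: abs_mult)
  have b1: "\<bar>a*M^2 + b*M + c\<bar> \<le> (\<bar>a\<bar>+\<bar>b\<bar>+\<bar>c\<bar>)*M^2"
  proof -
    have "\<bar>a*M^2 + b*M + c\<bar> \<le> \<bar>a\<bar>*M^2 + \<bar>b\<bar>*M + \<bar>c\<bar>"
      using abs_triangle_ineq[of "a*M^2 + b*M" c] abs_triangle_ineq[of "a*M^2" "b*M"] e1 e2 by linarith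
    also have "\<dots> \<le> \<bar>a\<bar>*M^2 + \<bar>b\<bar>*M^2 + \<bar>c\<bar>*M^2"
      using bM c2 by linarith
    finally show ?thesis by (simp add: algebra_simps)
  qed
  have b2: "\<bar>a*M^2 - b*M + c\<bar> \<le> (\<bar>a\<bar>+\<bar>b\<bar>+\<bar>c\<bar>)*M^2"
  proof -
    have "\<bar>a*M^2 - b*M + c\<bar> \<le> \<bar>a\<bar>*M^2 + \<bar>b\<bar>*M + \<bar>c\<bar>"
      using abs_triangle_ineq[of "a*M^2 - b*M" c] abs_triangle_ineq4[of "a*M^2" "b*M"] e1 e2 by linarith
    also have "\<dots> \<le> \<bar>a\<bar>*M^2 + \<bar>b\<bar>*M^2 + \<bar>c\<bar>*M^2"
      using bM c2 by linarith
    finally show ?thesis by (simp add: algebra_simps)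
  qed
  have M3: "M^3 = (1 + \<bar>a\<bar> + \<bar>b\<bar> + \<bar>c\<bar>) * M^2" unfolding M_def by (simp add: power2_eq_square power3_eq_cube)
  have M3': "M^3 = M^2 + (\<bar>a\<bar> + \<bar>b\<bar> + \<bar>c\<bar>) * M^2" using M3 by (simp add: algebra_simps)
  have l1: "a*M^2 + b*M + c \<ge> -((\<bar>a\<bar>+\<bar>b\<bar>+\<bar>c\<bar>)*M^2)" using b1 by linarith
  have l2: "a*M^2 - b*M + c \<le> (\<bar>a\<bar>+\<bar>b\<bar>+\<bar>c\<bar>)*M^2" using b2 by linarith
  have pos: "f M > 0" using l1 M3' M2 unfolding f_def by linarith
  have e: "f (-M) = - (M^3) + (a*M^2 - b*M + c)" unfolding f_def by (simp add: power3_eq_cube power2_eq_square)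
  have neg: "f (-M) < 0" unfolding e using l2 M3' M2 by linarith
  have "continuous_on {-M..M} f" unfolding f_def by (intro continuous_intros)
  then obtain x where "f x = 0" using IVT'[of f "-M" 0 M] pos neg M1 by force
  then show ?thesis unfolding f_def by blast
qed

lemma charpoly: "det ((A::real^3^3) - t *\<^sub>R mat 1) =
   - (t^3 + (-(A$1$1+A$2$2+A$3$3))*t^2 + (A$1$1*A$2$2 - A$1$2*A$2$1 + A$1$1*A$3$3 - A$1$3*A$3$1 + A$2$2*A$3$3 - A$2$3*A$3$2)*t + (- det A))"
  by (simp add: det_3 mat_def power2_eq_square power3_eq_cube algebra_simps)

lemma real_eigen: "\<exists>v t. v \<noteq> 0 \<and> (A::real^3^3) *v v = t *\<^sub>R v"
proof -
  obtain t where t: "t^3 + (-(A$1$1+A$2$2+A$3$3))*t^2 + (A$1$1*A$2$2 - A$1$2*A$2$1 + A$1$1*A$3$3 - A$1$3*A$3$1 + A$2$2*A$3$3 - A$2$3*A$3$2)*t + (- det A) = 0"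
    using cubic_root by blast
  have "det (A - t *\<^sub>R mat 1) = 0" unfolding charpoly t by simp
  then have "\<not> (\<exists>B. B ** (A - t *\<^sub>R mat 1) = mat 1)"
    using invertible_det_nz invertible_left_inverse by blast
  then obtain v where v: "v \<noteq> 0" "(A - t *\<^sub>R mat 1) *v v = 0"
    unfolding matrix_left_invertible_ker by blast
  then have "A *v v = t *\<^sub>R v"
    by (simp add: matrix_vector_mult_diff_rdistrib scaleR_matrix_vector_assoc[symmetric])
  then show ?thesis using v by blast
qed


lemma range3: "range (f :: 3 \<Rightarrow> 'a) = {f 1, f 2, f 3}"
proof
  show "range f \<subseteq> {f 1, f 2, f 3}"
  proof
    fix y assume "y \<in> range f"
    then obtain i where i: "y = f i" by blast
    have "i = 1 \<or> i = 2 \<or> i = 3" by (rule exhaust_3)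
    then show "y \<in> {f 1, f 2, f 3}" using i by blast
  qed
  show "{f 1, f 2, f 3} \<subseteq> range f" by blast
qed

lemma rows3: "rows (vector [a, b, c] :: real^3^3) = {a, b, c}"
proof -
  have "rows (vector [a, b, c] :: real^3^3) = range (\<lambda>i. (vector [a, b, c] :: real^3^3) $ i)"
    unfolding rows_def row_def by (auto simp: vec_lambda_eta)
  also have "\<dots> = {a, b, c}" unfolding range3 by (simp only: vector_3)
  finally show ?thesis .
qed
lemma lie_eval_add: "x \<in> lie_eval A B s \<Longrightarrow> y \<in> lie_eval A B s \<Longrightarrow> x + y \<in> lie_eval A B s"
proof -
  assume "x \<in> lie_eval A B s" "y \<in> lie_eval A B s"
  then obtain X Y where "X \<in> lie_gen A B" "x = X s" "Y \<in> lie_gen A B" "y = Y s" unfolding lie_eval_def by blast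
  then show ?thesis unfolding lie_eval_def by (intro CollectI exI[of _ "\<lambda>s. X s + Y s"]) (auto intro: lie_gen.add)
qed

lemma lie_eval_smult: "x \<in> lie_eval A B s \<Longrightarrow> c *\<^sub>R x \<in> lie_eval A B s"
proof -
  assume "x \<in> lie_eval A B s"
  then obtain X where "X \<in> lie_gen A B" "x = X s" unfolding lie_eval_def by blast
  then show ?thesis unfolding lie_eval_def by (intro CollectI exI[of _ "\<lambda>s. c *\<^sub>R X s"]) (auto intro: lie_gen.smult)
qed

theorem theorem2p7:
  fixes A B :: "real^3^3"
  shows "((\<forall>s\<in>S2. rank (hmatrix A B s) = 2) \<longrightarrow> LARC A B)
         \<and> (commutator A B = 0 \<longrightarrow> \<not> LARC A B)"
proof (intro conjI impI)
  assume H: "\<forall>s\<in>S2. rank (hmatrix A B s) = 2"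
  show "LARC A B" unfolding LARC_def
  proof
    fix s assume s: "s \<in> S2"
    then have n1: "s \<bullet> s = 1" unfolding S2_def by (simp add: power2_norm_eq_inner[symmetric])
    then have s0: "s \<noteq> 0" by auto
    have sub: "lie_eval A B s \<subseteq> {x. s \<bullet> x = 0}"
    proof
      fix y assume "y \<in> lie_eval A B s"
      then obtain X where "X \<in> lie_gen A B" "y = X s" unfolding lie_eval_def by blast
      then obtain C where "y = hfield C s" using lie_gen_h by blast
      then show "y \<in> {x. s \<bullet> x = 0}" using n1
        by (simp add: hfield_def inner_diff_right inner_commute)
    qed
    have "dim (lie_eval A B s) \<le> dim {x. s \<bullet> x = 0}" by (rule dim_subset[OF sub])
    also have "\<dots> = 2" using dim_hyperplane[OF s0] by (simp add: DIM_cart)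
    finally have up: "dim (lie_eval A B s) \<le> 2" .
    define g0 where "g0 = (\<lambda>s. hfield A s + 0 *\<^sub>R hfield B s)"
    define g1 where "g1 = (\<lambda>s. hfield A s + 1 *\<^sub>R hfield B s)"
    have g0: "g0 \<in> lie_gen A B" "g1 \<in> lie_gen A B" unfolding g0_def g1_def by (rule lie_gen.gen)+
    have g0e: "g0 = hfield A" unfolding g0_def by auto
    have g1e: "g1 = hfield (A + B)" unfolding g1_def by (auto simp: hfield_add)
    have hA: "hfield A s \<in> lie_eval A B s" unfolding lie_eval_def
      by (intro CollectI exI[of _ g0] conjI g0(1)) (simp add: g0_def)
    have hAB: "hfield A s + hfield B s \<in> lie_eval A B s" unfolding lie_eval_def
      by (intro CollectI exI[of _ g1] conjI g0(2)) (simp add: g1_def)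
    have hB: "hfield B s \<in> lie_eval A B s"
      using lie_eval_add[OF hAB lie_eval_smult[OF hA, of "-1"]] by simp
    have "commutator A (A + B) = commutator A B"
      unfolding commutator_def by (simp add: matrix_add_ldistrib madd_rdistrib)
    then have "vf_bracket g0 g1 = hfield (commutator A B)" unfolding g0e g1e by (simp add: bracket_h)
    then have hC: "hfield (commutator A B) s \<in> lie_eval A B s"
      unfolding lie_eval_def by (intro CollectI exI[of _ "vf_bracket g0 g1"] conjI lie_gen.bracket g0) simp
    have "rank (hmatrix A B s) = rank (vector [hfield A s, hfield B s, hfield (commutator A B) s] :: real^3^3)"
      unfolding hmatrix_def by (rule rank_transpose)
    also have "\<dots> = dim {hfield A s, hfield B s, hfield (commutator A B) s}"
      by (simp only: row_rank_def rows3)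
    also have "\<dots> \<le> dim (lie_eval A B s)" by (intro dim_subset) (simp add: hA hB hC)
    finally have "2 \<le> dim (lie_eval A B s)" using H s by simp
    then show "dim (lie_eval A B s) = 2" using up by simp
  qed
next
  assume H: "commutator A B = 0"
  obtain v t where v: "v \<noteq> 0" "A *v v = t *\<^sub>R v" using real_eigen by blast
  define s where "s = (1 / norm v) *\<^sub>R v"
  have ns: "norm s = 1" unfolding s_def using v by simp
  then have sS: "s \<in> S2" unfolding S2_def by simp
  have n1: "s \<bullet> s = 1" using ns by (simp add: power2_norm_eq_inner[symmetric])
  have As: "A *v s = t *\<^sub>R s" unfolding s_def using v
    by (simp add: matrix_vector_mult_scaleR)
  have hA0: "hfield A s = 0" unfolding hfield_def As using n1 by simp
  have "lie_eval A B s \<subseteq> span {hfield B s}"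
  proof
    fix y assume "y \<in> lie_eval A B s"
    then obtain X where "X \<in> lie_gen A B" "y = X s" unfolding lie_eval_def by blast
    then obtain a b where "y = hfield (a *\<^sub>R A + b *\<^sub>R B) s" using lie_gen_h0[OF H] by blast
    then have yb: "y = b *\<^sub>R hfield B s" by (simp add: hfield_add hfield_scale hA0)
    show "y \<in> span {hfield B s}" unfolding yb by (intro span_mul span_base) simp
  qed
  then have "dim (lie_eval A B s) \<le> card {hfield B s}" by (rule dim_le_card) simp
  then have "dim (lie_eval A B s) \<noteq> 2" by simp
  then show "\<not> LARC A B" unfolding LARC_def using sS by blast
qed

end
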